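(* Let $\mathcal{D}$ be a distribution on $\mathbb{R}^d\times\mathbb{R}$ with $\|\mathbf{x}\|_\infty\le1$ and $|y|\le B$ almost surely. The GAELR algorithm (with any sampling distribution $(q_1,\dots,q_d)$ and budget $k$) generates gradient estimates satisfying, for all $t$, $$\big\|\mathbb{E}_{\mathcal{D},A}[\widetilde{\mathbf{g}}_t^2]\big\|_\infty\le 4B^2\Big(\frac1k\big\|\mathbb{E}_{\mathcal{D},A}[\widetilde{\mathbf{x}}_{t,r}^2]\big\|_\infty+1\Big).$$
   Context: For a vector $\mathbf{a}$, $\mathbf{a}^2$ denotes its coordinatewise square. $\mathrm{clip}(x,c)=\max\{\min\{x,c\},-c\}$. Algorithm GAELR (parameters $B,\eta>0$, probabilities $q_i$ summing to $1$, integer budget $k>0$; i.i.d. examples $(\mathbf{x}_t,y_t)\sim\mathcal{D}$): $\mathbf{z}_1^\pm=\mathbf{1}_d$. For each $t$: $\mathbf{w}_t=(\mathbf{z}_t^+-\mathbf{z}_t^-)B/(\|\mathbf{z}_t^+\|_1+\|\mathbf{z}_t^-\|_1)$; for $r=1..k$ draw $i_{t,r}$ with probability $q_{i_{t,r}}$ and set $\widetilde{\mathbf{x}}_{t,r}=\frac{1}{q_{i_{t,r}}}\mathbf{x}_t[i_{t,r}]\mathbf{e}_{i_{t,r}}$ (identically distributed over $r$); $\widetilde{\mathbf{x}}_t=\frac1k\sum_r\widetilde{\mathbf{x}}_{t,r}$; draw $j_t$ with probability $p_j=|w_{t,j}|/\|\mathbf{w}_t\|_1$, $\widetilde\phi_t=\frac{w_{t,j_t}}{p_{j_t}}\mathbf{x}_t[j_t]-y_t$;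 $\widetilde{\mathbf{g}}_t=\widetilde\phi_t\widetilde{\mathbf{x}}_t$; $\bar{\mathbf{g}}_t[i]=\mathrm{clip}(\widetilde{\mathbf{g}}_t[i],1/\eta)$; $\mathbf{z}_{t+1}^+[i]=\mathbf{z}_t^+[i]e^{-\eta\bar{\mathbf{g}}_t[i]}$, $\mathbf{z}_{t+1}^-[i]=\mathbf{z}_t^-[i]e^{\eta\bar{\mathbf{g}}_t[i]}$. All draws independent. $\mathbb{E}_{\mathcal{D},A}$ is expectation over examples and algorithm randomness. *)

theory Defs
  imports "HOL-Analysis.Analysis" "HOL-Probability.Probability"
begin

text \<open>Coordinates are indexed by a finite type 'n (so d = CARD('n)).\<close>

definition l1norm :: "real^'n \<Rightarrow> real" where
  "l1norm v = (\<Sum>i\<in>UNIV. \<bar>v$i\<bar>)"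

definition linfnorm :: "real^'n \<Rightarrow> real" where
  "linfnorm v = Max (range (\<lambda>i. \<bar>v$i\<bar>))"

definition csq :: "real^'n \<Rightarrow> real^'n" where
  "csq v = (\<chi> i. (v$i)^2)"

definition clip :: "real \<Rightarrow> real \<Rightarrow> real" where
  "clip x c = max (min x c) (- c)"

text \<open>state = (z+, z-)\<close>
definition weight :: "real \<Rightarrow> (real^'n) \<times> (real^'n) \<Rightarrow> real^'n" where
  "weight B s = (B / (l1norm (fst s) + l1norm (snd s))) *\<^sub>R (fst s - snd s)"

text \<open>distribution of j_t: p_j = |w_j| / ||w||_1 (uniform if w = 0; then w_j/p_j = 0 anyway)\<close>
definition jdist :: "real^'n \<Rightarrow> 'n pmf" where
  "jdist w = (if w = 0 then pmf_of_set UNIV else embed_pmf (\<lambda>j. \<bar>w$j\<bar> / l1norm w))"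

definition xtil_r :: "'n pmf \<Rightarrow> real^'n \<Rightarrow> 'n \<Rightarrow> real^'n" where
  "xtil_r q x i = (x$i / pmf q i) *\<^sub>R axis i 1"

definition xtil :: "'n pmf \<Rightarrow> nat \<Rightarrow> real^'n \<Rightarrow> (nat \<Rightarrow> 'n) \<Rightarrow> real^'n" where
  "xtil q k x I = (1 / real k) *\<^sub>R (\<Sum>r<k. xtil_r q x (I r))"

definition phitil :: "real^'n \<Rightarrow> real^'n \<Rightarrow> real \<Rightarrow> 'n \<Rightarrow> real" where
  "phitil w x y j = (w$j / pmf (jdist w) j) * x$j - y"

text \<open>outcome of the randomness of one round: ((x_t,y_t), (i_{t,r})_{r<k}, j_t)\<close>
type_synonym 'n outcome = "((real^'n) \<times> real) \<times> (nat \<Rightarrow> 'n) \<times> 'n"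

definition gtil :: "'n pmf \<Rightarrow> nat \<Rightarrow> real^'n \<Rightarrow> 'n outcome \<Rightarrow> real^'n" where
  "gtil q k w \<omega> = phitil w (fst (fst \<omega>)) (snd (fst \<omega>)) (snd (snd \<omega>)) *\<^sub>R
                     xtil q k (fst (fst \<omega>)) (fst (snd \<omega>))"

definition next_state :: "real \<Rightarrow> (real^'n) \<times> (real^'n) \<Rightarrow> real^'n \<Rightarrow> (real^'n) \<times> (real^'n)" where
  "next_state \<eta> s g =
     (let gb = (\<chi> i. clip (g$i) (1/\<eta>))
      in ((\<chi> i. fst s $ i * exp (- \<eta> * gb$i)), (\<chi> i. snd s $ i * exp (\<eta> * gb$i))))"

definition step_space :: "((real^'n) \<times> real) measure \<Rightarrow> 'n pmf \<Rightarrow> nat \<Rightarrow> real^'n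
     \<Rightarrow> 'n outcome measure" where
  "step_space D q k w =
     D \<Otimes>\<^sub>M (measure_pmf (Pi_pmf {..<k} undefined (\<lambda>_. q)) \<Otimes>\<^sub>M measure_pmf (jdist w))"

primrec state_dist :: "((real^'n) \<times> real) measure \<Rightarrow> 'n pmf \<Rightarrow> nat \<Rightarrow> real \<Rightarrow> real
     \<Rightarrow> nat \<Rightarrow> ((real^'n) \<times> (real^'n)) measure" where
  "state_dist D q k B \<eta> 0 = return borel (1, 1)"
| "state_dist D q k B \<eta> (Suc t) =
     bind (state_dist D q k B \<eta> t)
       (\<lambda>s. distr (step_space D q k (weight B s)) borel
               (\<lambda>\<omega>. next_state \<eta> s (gtil q k (weight B s) \<omega>)))"

text \<open>E_{D,A}[F] for a round-t quantity F(state_t, outcome_t), written as the iterated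
  integral over the law of the state and then the round's fresh randomness\<close>
definition EA :: "((real^'n) \<times> real) measure \<Rightarrow> 'n pmf \<Rightarrow> nat \<Rightarrow> real \<Rightarrow> real \<Rightarrow> nat
     \<Rightarrow> ((real^'n) \<times> (real^'n) \<Rightarrow> 'n outcome \<Rightarrow> real^'n) \<Rightarrow> real^'n" where
  "EA D q k B \<eta> t F =
     (\<integral>s. (\<integral>\<omega>. F s \<omega> \<partial>step_space D q k (weight B s)) \<partial>state_dist D q k B \<eta> t)"

end

theory Submission
  imports Defs
begin


lemma l1norm_nonneg: "l1norm v \<ge> 0"
  unfolding l1norm_def by (simp add: sum_nonneg)

lemma l1norm_zero: "l1norm (v::real^'n) = 0 \<longleftrightarrow> v = 0"
  unfolding l1norm_def
  by (subst sum_nonneg_eq_0_iff) (auto simp: vec_eq_iff)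

lemma jdist_pmf:
  "pmf (jdist (w::real^'n)) j = (if w = 0 then 1 / real CARD('n) else \<bar>w$j\<bar> / l1norm w)"
proof (cases "w = 0")
  case True then show ?thesis by (simp add: jdist_def pmf_of_set)
next
  case False
  have pos: "l1norm w > 0" using l1norm_nonneg[of w] l1norm_zero[of w] False by linarith
  have nn: "0 \<le> \<bar>w $ x\<bar> / l1norm w" for x
  proof -
    have "0 \<le> l1norm w" using pos by linarith
    then show "0 \<le> \<bar>w $ x\<bar> / l1norm w" by simp
  qed
  have "pmf (embed_pmf (\<lambda>j. \<bar>w$j\<bar> / l1norm w)) j = \<bar>w$j\<bar> / l1norm w"
  proof (rule pmf_embed_pmf)
    show "0 \<le> \<bar>w $ x\<bar> / l1norm w" for x by (rule nn)
    have "(\<Sum>x\<in>UNIV. \<bar>w $ x\<bar> / l1norm w) = 1"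
      using pos by (simp add: sum_divide_distrib[symmetric] l1norm_def)
    moreover have "(\<Sum>x\<in>UNIV. ennreal (\<bar>w $ x\<bar> / l1norm w)) = ennreal (\<Sum>x\<in>UNIV. \<bar>w $ x\<bar> / l1norm w)"
      by (rule sum_ennreal) (rule nn)
    ultimately show "(\<integral>\<^sup>+ x. ennreal (\<bar>w $ x\<bar> / l1norm w) \<partial>count_space UNIV) = 1"
      by (simp add: nn_integral_count_space_finite)
  qed
  then show ?thesis using False by (simp add: jdist_def)
qed

lemma ratio: "(w::real^'n) $ j / pmf (jdist w) j = sgn (w$j) * l1norm w"
proof (cases "w = 0")
  case True then show ?thesis by (simp add: l1norm_def)
next
  case False
  have pos: "l1norm w > 0" using l1norm_nonneg[of w] l1norm_zero[of w] False by linarith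
  consider "w$j = 0" | "w$j > 0" | "w$j < 0" by linarith
  then show ?thesis
  proof cases
    case 1 then show ?thesis by (simp add: jdist_pmf)
  next
    case 2 then show ?thesis using False pos by (simp add: jdist_pmf)
  next
    case 3 then show ?thesis using False pos by (simp add: jdist_pmf)
  qed
qed

lemma weight_l1: assumes "B > 0" shows "l1norm (weight B s) \<le> B"
proof -
  obtain a b where s: "s = (a,b)" by force
  have tri: "l1norm (a - b) \<le> l1norm a + l1norm b"
    unfolding l1norm_def by (simp add: sum.distrib[symmetric] sum_mono abs_triangle_ineq4)
  have "l1norm (weight B s) = \<bar>B / (l1norm a + l1norm b)\<bar> * l1norm (a - b)"
    by (simp add: weight_def s l1norm_def sum_distrib_left abs_mult)
  also have "\<dots> \<le> B"
  proof (cases "l1norm a + l1norm b = 0")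
    case True then show ?thesis using assms by simp
  next
    case False
    then have p: "l1norm a + l1norm b > 0" using l1norm_nonneg[of a] l1norm_nonneg[of b] by linarith
    have "\<bar>B / (l1norm a + l1norm b)\<bar> * l1norm (a - b) = B * (l1norm (a-b) / (l1norm a + l1norm b))"
      using p assms by simp
    also have "\<dots> \<le> B * 1" using tri p assms
      by (intro mult_left_mono) (auto simp: divide_le_eq)
    finally show ?thesis by simp
  qed
  finally show ?thesis .
qed

lemma phi_bound:
  assumes "\<bar>(x::real^'n)$j\<bar> \<le> 1" "\<bar>y\<bar> \<le> B" "l1norm w \<le> B"
  shows "(phitil w x y j)^2 \<le> 4 * B^2"
proof -
  define a where "a = w $ j / pmf (jdist w) j"
  have B0: "B \<ge> 0" using assms(3) l1norm_nonneg[of w] by linarith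
  have a: "\<bar>a\<bar> \<le> B"
    using assms(3) l1norm_nonneg[of w] by (simp add: a_def ratio abs_mult sgn_if)
  have "\<bar>a\<bar> * \<bar>x$j\<bar> \<le> B * 1"
    by (rule mult_mono) (use a assms(1) B0 in auto)
  then have "\<bar>a * x$j\<bar> \<le> B" by (simp add: abs_mult)
  then have "\<bar>phitil w x y j\<bar> \<le> 2 * B" using assms(2) unfolding phitil_def a_def[symmetric] by linarith
  then have "\<bar>phitil w x y j\<bar>^2 \<le> (2*B)^2" by (intro power_mono) auto
  then show ?thesis by (simp add: power_mult_distrib)
qed


lemma fin_Pi: "finite (set_pmf (Pi_pmf {..<k::nat} dflt (\<lambda>_. (q::'n::finite pmf))))"
  by (rule finite_subset[OF set_Pi_pmf_subset']) (auto intro!: finite_PiE_dflt)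

lemma pair_prod:
  fixes f :: "'a \<Rightarrow> real" and g :: "'b \<Rightarrow> real"
  assumes A: "finite (set_pmf A)" and B: "finite (set_pmf B)"
  shows "measure_pmf.expectation (pair_pmf A B) (\<lambda>z. f (fst z) * g (snd z))
       = measure_pmf.expectation A f * measure_pmf.expectation B g"
proof -
  have "measure_pmf.expectation (pair_pmf A B) (\<lambda>z. f (fst z) * g (snd z))
      = (\<Sum>z\<in>set_pmf A \<times> set_pmf B. f (fst z) * g (snd z) * pmf (pair_pmf A B) z)"
    by (rule integral_measure_pmf_real) (auto simp: A B)
  also have "\<dots> = (\<Sum>a\<in>set_pmf A. \<Sum>b\<in>set_pmf B. (f a * pmf A a) * (g b * pmf B b))"
    unfolding sum.cartesian_product by (rule sum.cong) (auto simp: pmf_pair mult_ac)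
  also have "\<dots> = (\<Sum>a\<in>set_pmf A. f a * pmf A a) * (\<Sum>b\<in>set_pmf B. g b * pmf B b)"
    by (simp add: sum_product)
  also have "(\<Sum>a\<in>set_pmf A. f a * pmf A a) = measure_pmf.expectation A f"
    by (rule integral_measure_pmf_real[symmetric]) (auto simp: A)
  also have "(\<Sum>b\<in>set_pmf B. g b * pmf B b) = measure_pmf.expectation B g"
    by (rule integral_measure_pmf_real[symmetric]) (auto simp: B)
  finally show ?thesis .
qed

lemma Pi_moments:
  fixes a :: "'n::finite \<Rightarrow> real" and q :: "'n pmf"
  defines "m \<equiv> measure_pmf.expectation q a"
  defines "v \<equiv> measure_pmf.expectation q (\<lambda>i. (a i)^2)"
  shows "measure_pmf.expectation (Pi_pmf {..<k} dflt (\<lambda>_. q)) (\<lambda>I. \<Sum>r<k. a (I r)) = real k * m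
       \<and> measure_pmf.expectation (Pi_pmf {..<k} dflt (\<lambda>_. q)) (\<lambda>I. (\<Sum>r<k. a (I r))^2)
            = real k * v + real k * (real k - 1) * m^2"
proof (induction k)
  case 0
  then show ?case by simp
next
  case (Suc k)
  let ?P = "Pi_pmf {..<k} dflt (\<lambda>_. q)"
  let ?Q = "pair_pmf q ?P"
  let ?S = "\<lambda>I. \<Sum>r<k. a (I r)"
  have finq: "finite (set_pmf q)" by simp
  have finP: "finite (set_pmf ?P)" by (rule fin_Pi)
  have finQ: "finite (set_pmf ?Q)" using finq finP by simp
  have eqP: "Pi_pmf {..<Suc k} dflt (\<lambda>_. q) = map_pmf (\<lambda>(y,f). f(k:=y)) ?Q"
    using Pi_pmf_insert[of "{..<k}" k dflt "\<lambda>_. q"] by (simp add: lessThan_Suc)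
  have sumeq: "(\<Sum>r<Suc k. a ((f(k:=y)) r)) = a y + ?S f" for f y
  proof -
    have "(\<Sum>r<k. a ((f(k:=y)) r)) = ?S f" by (intro sum.cong) auto
    then show ?thesis by simp
  qed
  have int: "integrable (measure_pmf ?Q) g" for g :: "_ \<Rightarrow> real"
    by (rule integrable_measure_pmf_finite[OF finQ])
  have Ea: "measure_pmf.expectation ?Q (\<lambda>z. a (fst z)) = m"
    unfolding m_def by (fact expectation_pair_pmf_fst)
  have Ea2: "measure_pmf.expectation ?Q (\<lambda>z. (a (fst z))^2) = v"
    unfolding v_def by (fact expectation_pair_pmf_fst)
  have ES: "measure_pmf.expectation ?Q (\<lambda>z. ?S (snd z)) = real k * m"
    using expectation_pair_pmf_snd[of q ?P ?S] Suc.IH by (simp only: m_def)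
  have ES2: "measure_pmf.expectation ?Q (\<lambda>z. (?S (snd z))^2) = real k * v + real k * (real k - 1) * m^2"
    using expectation_pair_pmf_snd[of q ?P "\<lambda>I. (?S I)^2"] Suc.IH by (simp only: m_def v_def)
  have E1: "measure_pmf.expectation ?Q (\<lambda>z. a (fst z) + ?S (snd z)) = m + real k * m"
    by (subst Bochner_Integration.integral_add) (auto simp only: int Ea ES)
  have E2: "measure_pmf.expectation ?Q (\<lambda>z. (a (fst z) + ?S (snd z))^2)
        = v + 2 * (m * (real k * m)) + (real k * v + real k * (real k - 1) * m^2)"
  proof -
    have "(\<lambda>z. (a (fst z) + ?S (snd z))^2) = (\<lambda>z. (a (fst z))^2 + 2 * (a (fst z) * ?S (snd z)) + (?S (snd z))^2)"
      by (simp add: power2_eq_square algebra_simps)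
    then have "measure_pmf.expectation ?Q (\<lambda>z. (a (fst z) + ?S (snd z))^2)
       = measure_pmf.expectation ?Q (\<lambda>z. (a (fst z))^2) + 2 * measure_pmf.expectation ?Q (\<lambda>z. a (fst z) * ?S (snd z))
         + measure_pmf.expectation ?Q (\<lambda>z. (?S (snd z))^2)"
      by (simp only: Bochner_Integration.integral_add int integral_mult_right_zero)
    also have "measure_pmf.expectation ?Q (\<lambda>z. a (fst z) * ?S (snd z)) = m * (real k * m)"
      using pair_prod[OF finq finP, of a ?S] Suc.IH by (simp add: m_def)
    finally show ?thesis by (simp only: Ea2 ES2)
  qed
  show ?case
    unfolding eqP integral_map_pmf
    using E1 E2 by (simp add: case_prod_unfold sumeq algebra_simps power2_eq_square)
qed


lemma nth_meas[measurable (raw)]: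
  "f \<in> borel_measurable M \<Longrightarrow> (\<lambda>x. (f x :: real^'n) $ i) \<in> borel_measurable M"
proof -
  assume f: "f \<in> borel_measurable M"
  have "(\<lambda>x. f x \<bullet> axis i 1) \<in> borel_measurable M" using f by measurable
  moreover have "\<And>x. f x \<bullet> axis i 1 = f x $ i" by (simp add: inner_axis)
  ultimately show ?thesis by simp
qed

lemma vec_meas:
  fixes g :: "'a \<Rightarrow> 'n::finite \<Rightarrow> real"
  assumes "\<And>i. (\<lambda>x. g x i) \<in> borel_measurable M"
  shows "(\<lambda>x. \<chi> i. g x i) \<in> borel_measurable M"
proof (subst borel_measurable_euclidean_space, intro ballI)
  fix b :: "real^'n" assume "b \<in> Basis"
  then obtain j where b: "b = axis j 1" by (auto simp: Basis_vec_def)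
  show "(\<lambda>x. (\<chi> i. g x i) \<bullet> b) \<in> borel_measurable M"
    using assms[of j] by (simp add: b inner_axis)
qed

lemma csq_meas[measurable (raw)]:
  "f \<in> borel_measurable M \<Longrightarrow> (\<lambda>x. csq (f x :: real^'n)) \<in> borel_measurable M"
  unfolding csq_def by (rule vec_meas) measurable

lemma l1norm_meas[measurable (raw)]:
  "f \<in> borel_measurable M \<Longrightarrow> (\<lambda>x. l1norm (f x :: real^'n)) \<in> borel_measurable M"
  unfolding l1norm_def by measurable

lemma cc_meas:
  fixes g :: "'a \<Rightarrow> 'n::finite" and F :: "'n \<Rightarrow> 'a \<Rightarrow> 'b::topological_space"
  assumes "\<And>c. (\<lambda>x. F c x) \<in> borel_measurable M" "g \<in> measurable M (count_space UNIV)"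
  shows "(\<lambda>x. F (g x) x) \<in> borel_measurable M"
  by (rule measurable_compose_countable'[OF assms(1) assms(2)]) auto

lemma I_meas:
  "(\<lambda>\<omega>::'x \<times> (nat \<Rightarrow> 'b) \<times> 'c. fst (snd \<omega>) r) \<in> measurable (M \<Otimes>\<^sub>M (count_space UNIV \<Otimes>\<^sub>M N)) (count_space UNIV)"
proof -
  have "(\<lambda>I::nat\<Rightarrow>'b. I r) \<in> measurable (count_space UNIV) (count_space UNIV)" by simp
  then show ?thesis by measurable
qed

lemma j_meas:
  "(\<lambda>\<omega>. snd (snd \<omega>)) \<in> measurable (M \<Otimes>\<^sub>M (N \<Otimes>\<^sub>M count_space UNIV)) (count_space UNIV)"
  by measurable

type_synonym 'n OM = "'n outcome measure"

definition Om :: "('n::finite) OM" where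
  "Om = (borel \<Otimes>\<^sub>M borel) \<Otimes>\<^sub>M (count_space UNIV \<Otimes>\<^sub>M count_space UNIV)"

lemma sets_step: assumes "sets D = sets borel"
  shows "sets (step_space D q k w) = sets (Om :: 'n::finite OM)"
proof -
  have "sets D = sets (borel \<Otimes>\<^sub>M borel)" using assms by (simp only: borel_prod)
  then show ?thesis unfolding step_space_def Om_def
    by (intro sets_pair_measure_cong) (simp_all add: sets_measure_pmf_count_space)
qed

lemma step_prob: assumes "prob_space D" shows "prob_space (step_space D q k w)"
  unfolding step_space_def
  by (intro prob_space_pair assms prob_space_measure_pmf)

lemma phitil_alt: "phitil w x y j = sgn (w$j) * l1norm w * x$j - y"
  by (simp add: phitil_def ratio)

lemma xtil_r_meas:
  fixes X :: "'a \<Rightarrow> real^'n::finite" and L :: "'a \<Rightarrow> 'n"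
  assumes [measurable]: "X \<in> borel_measurable M" and L: "L \<in> measurable M (count_space UNIV)"
  shows "(\<lambda>\<omega>. xtil_r q (X \<omega>) (L \<omega>)) \<in> borel_measurable M"
  unfolding xtil_r_def
  by (rule cc_meas[where F="\<lambda>c \<omega>. (X \<omega> $ c / pmf q c) *\<^sub>R axis c 1", OF _ L]) measurable

lemma xtil_meas:
  fixes X :: "'a \<Rightarrow> real^'n::finite"
  assumes [measurable]: "X \<in> borel_measurable M"
    and L: "\<And>r. (\<lambda>\<omega>. I \<omega> r) \<in> measurable M (count_space UNIV)"
  shows "(\<lambda>\<omega>. xtil q k (X \<omega>) (I \<omega>)) \<in> borel_measurable M"
proof -
  have [measurable]: "(\<lambda>\<omega>. xtil_r q (X \<omega>) (I \<omega> r)) \<in> borel_measurable M" for r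
    by (rule xtil_r_meas[OF assms(1) L])
  show ?thesis unfolding xtil_def by measurable
qed

lemma gtil_meas:
  fixes W :: "'a \<Rightarrow> real^'n::finite"
  assumes [measurable]: "W \<in> borel_measurable M" "X \<in> borel_measurable M" "Y \<in> borel_measurable M"
    and L: "\<And>r. (\<lambda>\<omega>. I \<omega> r) \<in> measurable M (count_space UNIV)"
    and J: "J \<in> measurable M (count_space UNIV)"
  shows "(\<lambda>\<omega>. gtil q k (W \<omega>) ((X \<omega>, Y \<omega>), (I \<omega>, J \<omega>))) \<in> borel_measurable M"
proof -
  have [measurable]: "(\<lambda>\<omega>. xtil q k (X \<omega>) (I \<omega>)) \<in> borel_measurable M"
    by (rule xtil_meas[OF assms(2) L])
  have [measurable]: "(\<lambda>\<omega>. phitil (W \<omega>) (X \<omega>) (Y \<omega>) (J \<omega>)) \<in> borel_measurable M"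
    unfolding phitil_alt
    by (rule cc_meas[where F="\<lambda>c \<omega>. sgn (W \<omega>$c) * l1norm (W \<omega>) * X \<omega>$c - Y \<omega>", OF _ J]) measurable
  show ?thesis unfolding gtil_def by simp measurable
qed


lemma weight_meas[measurable (raw)]:
  assumes "S \<in> borel_measurable M"
  shows "(\<lambda>x. weight B (S x :: (real^'n) \<times> (real^'n))) \<in> borel_measurable M"
proof -
  have [measurable]: "S \<in> measurable M (borel \<Otimes>\<^sub>M borel)" using assms by (simp add: borel_prod)
  show ?thesis unfolding weight_def by measurable
qed

lemma pred_vec_zero:
  assumes "W \<in> borel_measurable M"
  shows "Measurable.pred M (\<lambda>x. W x = (0::real^'n))"
  by (rule pred_eq_const1[OF assms]) simp

lemma jdist_kernel:
  fixes W :: "'a \<Rightarrow> real^'n::finite"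
  assumes [measurable]: "W \<in> borel_measurable M"
  shows "(\<lambda>s. measure_pmf (jdist (W s))) \<in> measurable M (subprob_algebra (count_space UNIV))"
proof (rule measurable_subprob_algebra)
  fix a show "subprob_space (measure_pmf (jdist (W a)))" by (rule prob_space_imp_subprob_space) (rule prob_space_measure_pmf)
  show "sets (measure_pmf (jdist (W a))) = sets (count_space UNIV)" by simp
next
  fix A :: "'n set"
  have [measurable]: "Measurable.pred M (\<lambda>x. W x = 0)" by (rule pred_vec_zero) simp
  have "(\<lambda>a. ennreal (\<Sum>s\<in>A. pmf (jdist (W a)) s)) \<in> borel_measurable M"
    unfolding jdist_pmf by measurable
  then show "(\<lambda>a. emeasure (measure_pmf (jdist (W a))) A) \<in> borel_measurable M"
    by (simp add: emeasure_measure_pmf_finite)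
qed

lemma step_kernel:
  fixes W :: "'a \<Rightarrow> real^'n::finite"
  assumes [measurable]: "W \<in> borel_measurable M" and D: "prob_space D" "sets D = sets borel"
  shows "(\<lambda>s. step_space D q k (W s)) \<in> measurable M (subprob_algebra Om)"
proof -
  have eq: "subprob_algebra Om = subprob_algebra (D \<Otimes>\<^sub>M (count_space UNIV \<Otimes>\<^sub>M count_space UNIV))"
  proof -
    have "sets D = sets (borel \<Otimes>\<^sub>M borel)" using D(2) by (simp only: borel_prod)
    then show ?thesis unfolding Om_def
      by (intro subprob_algebra_cong sets_pair_measure_cong) simp_all
  qed
  have c1: "(\<lambda>s. D) \<in> measurable M (subprob_algebra D)"
    by (rule measurable_const) (simp add: space_subprob_algebra D prob_space_imp_subprob_space)
  have c2: "(\<lambda>s. measure_pmf (Pi_pmf {..<k} undefined (\<lambda>_. q))) \<in> measurable M (subprob_algebra (count_space UNIV))"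
    by (rule measurable_const) (rule measure_pmf_in_subprob_algebra)
  show ?thesis unfolding eq step_space_def
    by (intro measurable_pair_measure c1 c2 jdist_kernel assms)
qed

lemma next_meas:
  assumes S: "S \<in> borel_measurable M" and [measurable]: "G \<in> borel_measurable M"
  shows "(\<lambda>x. next_state \<eta> (S x :: (real^'n::finite) \<times> (real^'n)) (G x)) \<in> borel_measurable M"
proof -
  have [measurable]: "S \<in> measurable M (borel \<Otimes>\<^sub>M borel)" using S by (simp add: borel_prod)
  have m1: "(\<lambda>x. fst (next_state \<eta> (S x) (G x))) \<in> borel_measurable M"
    unfolding next_state_def Let_def clip_def by simp (rule vec_meas, measurable)
  have m2: "(\<lambda>x. snd (next_state \<eta> (S x) (G x))) \<in> borel_measurable M"
    unfolding next_state_def Let_def clip_def by simp (rule vec_meas, measurable)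
  have "(\<lambda>x. (fst (next_state \<eta> (S x) (G x)), snd (next_state \<eta> (S x) (G x)))) \<in> measurable M (borel \<Otimes>\<^sub>M borel)"
    by (rule measurable_Pair[OF m1 m2])
  then show ?thesis by (simp add: borel_prod)
qed

lemma Xm: "(\<lambda>\<omega>. fst (fst \<omega>)) \<in> borel_measurable (Om::('n::finite) OM)"
  unfolding Om_def by measurable
lemma Ym: "(\<lambda>\<omega>. snd (fst \<omega>)) \<in> borel_measurable (Om::('n::finite) OM)"
  unfolding Om_def by measurable
lemma Im0: "(\<lambda>\<omega>. fst (snd \<omega>) r) \<in> measurable (Om::('n::finite) OM) (count_space UNIV)"
  unfolding Om_def by (rule I_meas)
lemma Jm0: "(\<lambda>\<omega>. snd (snd \<omega>)) \<in> measurable (Om::('n::finite) OM) (count_space UNIV)"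
  unfolding Om_def by (rule j_meas)

lemma gtil_Om: "gtil q k w \<in> borel_measurable (Om::('n::finite) OM)"
proof -
  have "(\<lambda>\<omega>. gtil q k ((\<lambda>_. w) \<omega>) ((fst (fst \<omega>), snd (fst \<omega>)), (fst (snd \<omega>), snd (snd \<omega>))))
         \<in> borel_measurable (Om :: 'n OM)"
    by (rule gtil_meas[OF borel_measurable_const Xm Ym Im0 Jm0])
  then show ?thesis by simp
qed

lemma gtil_kernel_meas:
  "(\<lambda>p. gtil q k (weight B (fst p)) (snd p)) \<in> borel_measurable (borel \<Otimes>\<^sub>M (Om :: ('n::finite) OM))"
proof -
  have Wm: "(\<lambda>p. weight B (fst p :: (real^'n) \<times> (real^'n))) \<in> borel_measurable (borel \<Otimes>\<^sub>M (Om :: 'n OM))"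
    by (rule weight_meas[OF measurable_fst])
  have "(\<lambda>p. gtil q k (weight B (fst p)) ((fst (fst (snd p)), snd (fst (snd p))), (fst (snd (snd p)), snd (snd (snd p)))))
          \<in> borel_measurable (borel \<Otimes>\<^sub>M (Om :: 'n OM))"
    by (rule gtil_meas[OF Wm measurable_compose[OF measurable_snd Xm] measurable_compose[OF measurable_snd Ym]
          measurable_compose[OF measurable_snd Im0] measurable_compose[OF measurable_snd Jm0]])
  then show ?thesis by simp
qed

lemma state_kernel:
  fixes D :: "((real^'n::finite) \<times> real) measure"
  assumes D: "prob_space D" "sets D = sets borel"
  shows "(\<lambda>s. distr (step_space D q k (weight B s)) borel
               (\<lambda>\<omega>. next_state \<eta> s (gtil q k (weight B s) \<omega>))) \<in> borel \<rightarrow>\<^sub>M prob_algebra borel"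
proof (rule measurable_prob_algebraI)
  fix s show "prob_space (distr (step_space D q k (weight B s)) borel (\<lambda>\<omega>. next_state \<eta> s (gtil q k (weight B s) \<omega>)))"
  proof (rule prob_space.prob_space_distr[OF step_prob[OF D(1)]])
    have "(\<lambda>\<omega>. next_state \<eta> s (gtil q k (weight B s) \<omega>)) \<in> borel_measurable (Om :: 'n OM)"
      by (rule next_meas[OF borel_measurable_const gtil_Om])
    then show "(\<lambda>\<omega>. next_state \<eta> s (gtil q k (weight B s) \<omega>)) \<in> borel_measurable (step_space D q k (weight B s))"
      by (subst measurable_cong_sets[OF sets_step[OF D(2)] refl])
  qed
next
  show "(\<lambda>s. distr (step_space D q k (weight B s)) borel (\<lambda>\<omega>. next_state \<eta> s (gtil q k (weight B s) \<omega>)))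
      \<in> borel \<rightarrow>\<^sub>M subprob_algebra borel"
  proof (rule measurable_distr2[where M=Om])
    show "(\<lambda>s. step_space D q k (weight B s)) \<in> borel \<rightarrow>\<^sub>M subprob_algebra Om"
      by (rule step_kernel[OF weight_meas[OF measurable_ident_sets[OF refl]] D])
    have "(\<lambda>p. next_state \<eta> (fst p) (gtil q k (weight B (fst p)) (snd p))) \<in> borel_measurable (borel \<Otimes>\<^sub>M (Om :: 'n OM))"
      by (rule next_meas[OF measurable_fst gtil_kernel_meas])
    then show "(\<lambda>(s, \<omega>). next_state \<eta> s (gtil q k (weight B s) \<omega>)) \<in> borel \<Otimes>\<^sub>M Om \<rightarrow>\<^sub>M borel"
      by (simp add: case_prod_beta)
  qed
qed

lemma state_ok:
  fixes D :: "((real^'n::finite) \<times> real) measure"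
  assumes D: "prob_space D" "sets D = sets borel"
  shows "prob_space (state_dist D q k B \<eta> t) \<and> sets (state_dist D q k B \<eta> t) = sets borel"
proof (induction t)
  case 0
  then show ?case by (simp add: prob_space_return)
next
  case (Suc t)
  have A: "state_dist D q k B \<eta> t \<in> space (prob_algebra borel)"
    using Suc.IH by (simp add: space_prob_algebra)
  show ?case
    using prob_space_bind'[OF A state_kernel[OF D]] sets_bind'[OF A state_kernel[OF D]] by simp
qed


lemma integrable_vec:
  fixes f :: "'a \<Rightarrow> real^'n::finite"
  assumes "\<And>i. integrable M (\<lambda>x. f x $ i)"
  shows "integrable M f"
proof -
  have eq: "f = (\<lambda>x. \<Sum>i\<in>UNIV. (f x $ i) *\<^sub>R axis i 1)"
    by (rule ext) (simp add: vec_eq_iff axis_def sum_component if_distrib cong: if_cong)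
  show ?thesis by (subst eq) (auto intro!: integrable_sum integrable_scaleR_left assms)
qed

lemma integral_nth:
  fixes f :: "'a \<Rightarrow> real^'n::finite"
  assumes "integrable M f"
  shows "(integral\<^sup>L M f) $ i = (\<integral>x. f x $ i \<partial>M)"
  using integral_bounded_linear[OF bounded_linear_vec_nth assms, of i] by simp

lemma vec_integral_nonneg:
  fixes f :: "'a \<Rightarrow> real^'n::finite"
  assumes "\<And>x. 0 \<le> f x $ i"
  shows "0 \<le> (integral\<^sup>L M f) $ i"
proof (cases "integrable M f")
  case True
  then show ?thesis by (simp add: integral_nth assms)
next
  case False
  then show ?thesis by (simp add: not_integrable_integral_eq)
qed

lemma csq_nth: "csq v $ i = (v $ i)^2"
  by (simp add: csq_def)

lemma AE_lift:
  fixes D :: "'a measure" and M2 :: "'b measure"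
  assumes "sigma_finite_measure M2" and "AE x in D. P x"
  shows "AE \<omega> in D \<Otimes>\<^sub>M M2. P (fst \<omega>)"
proof -
  from assms(2) obtain Nl where Nl: "Nl \<in> null_sets D" "{x \<in> space D. \<not> P x} \<subseteq> Nl"
    by (auto elim!: AE_E)
  have "Nl \<times> space M2 \<in> null_sets (D \<Otimes>\<^sub>M M2)"
    by (rule sigma_finite_measure.times_in_null_sets1[OF assms(1) Nl(1)]) simp
  moreover have "{\<omega> \<in> space (D \<Otimes>\<^sub>M M2). \<not> P (fst \<omega>)} \<subseteq> Nl \<times> space M2"
    using Nl(2) by (auto simp: space_pair_measure)
  ultimately show ?thesis by (rule AE_I')
qed

lemma inner_fst:
  fixes g :: "'a \<Rightarrow> real"
  shows "(\<integral>y. g (fst y) \<partial>(measure_pmf A \<Otimes>\<^sub>M measure_pmf B)) = (\<integral>a. g a \<partial>measure_pmf A)"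
proof -
  have d: "distr (measure_pmf A \<Otimes>\<^sub>M measure_pmf B) (measure_pmf A) fst = measure_pmf A"
    by (rule prob_space.distr_pair_fst) (rule prob_space_measure_pmf)
  have "(\<integral>a. g a \<partial>measure_pmf A) = (\<integral>a. g a \<partial>distr (measure_pmf A \<Otimes>\<^sub>M measure_pmf B) (measure_pmf A) fst)"
    by (simp only: d)
  also have "\<dots> = (\<integral>y. g (fst y) \<partial>(measure_pmf A \<Otimes>\<^sub>M measure_pmf B))"
    by (rule integral_distr) auto
  finally show ?thesis ..
qed

lemma fub:
  fixes D :: "((real^'n::finite) \<times> real) measure" and f :: "(real^'n) \<times> real \<Rightarrow> (nat \<Rightarrow> 'n) \<Rightarrow> real"
  assumes D: "prob_space D"
    and int: "integrable (step_space D q k w) (\<lambda>\<omega>. f (fst \<omega>) (fst (snd \<omega>)))"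
  shows "(\<integral>\<omega>. f (fst \<omega>) (fst (snd \<omega>)) \<partial>step_space D q k w)
          = (\<integral>x. (\<integral>I. f x I \<partial>measure_pmf (Pi_pmf {..<k} undefined (\<lambda>_. q))) \<partial>D)"
    and "integrable D (\<lambda>x. \<integral>I. f x I \<partial>measure_pmf (Pi_pmf {..<k} undefined (\<lambda>_. q)))"
proof -
  let ?M2 = "measure_pmf (Pi_pmf {..<k} undefined (\<lambda>_. q)) \<Otimes>\<^sub>M measure_pmf (jdist w)"
  interpret D: prob_space D by (rule D)
  interpret M2: prob_space ?M2 by (intro prob_space_pair prob_space_measure_pmf)
  interpret pair_sigma_finite D ?M2 ..
  have int': "integrable (D \<Otimes>\<^sub>M ?M2) (\<lambda>\<omega>. f (fst \<omega>) (fst (snd \<omega>)))"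
    using int by (simp add: step_space_def)
  have "(\<integral>\<omega>. f (fst \<omega>) (fst (snd \<omega>)) \<partial>step_space D q k w) = (\<integral>x. (\<integral>y. f x (fst y) \<partial>?M2) \<partial>D)"
    unfolding step_space_def using integral_fst'[OF int'] by simp
  also have "\<dots> = (\<integral>x. (\<integral>I. f x I \<partial>measure_pmf (Pi_pmf {..<k} undefined (\<lambda>_. q))) \<partial>D)"
    by (simp only: inner_fst)
  finally show "(\<integral>\<omega>. f (fst \<omega>) (fst (snd \<omega>)) \<partial>step_space D q k w)
          = (\<integral>x. (\<integral>I. f x I \<partial>measure_pmf (Pi_pmf {..<k} undefined (\<lambda>_. q))) \<partial>D)" .
  have "integrable D (\<lambda>x. \<integral>y. f x (fst y) \<partial>?M2)"
    using integrable_fst'[OF int'] by simp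
  then show "integrable D (\<lambda>x. \<integral>I. f x I \<partial>measure_pmf (Pi_pmf {..<k} undefined (\<lambda>_. q)))"
    by (simp only: inner_fst)
qed


lemma xr_nth: "xtil_r q x l $ i = (if l = i then x$i / pmf q i else 0)"
  by (simp add: xtil_r_def axis_def)

lemma xt_nth: "xtil q k x I $ i = (1 / real k) * (\<Sum>r<k. xtil_r q x (I r) $ i)"
  by (simp add: xtil_def sum_component)

lemma Eq_v: "(\<integral>l. (xtil_r q x l $ i)^2 \<partial>measure_pmf q) = pmf q i * (x$i / pmf q i)^2"
  by (subst integral_measure_pmf_real[where A="{i}"]) (auto simp: xr_nth split: if_splits)

lemma Eq_m: "(\<integral>l. xtil_r q x l $ i \<partial>measure_pmf q) = pmf q i * (x$i / pmf q i)"
  by (subst integral_measure_pmf_real[where A="{i}"]) (auto simp: xr_nth split: if_splits)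

lemma EP_r:
  fixes q :: "'n::finite pmf"
  assumes "r < (k::nat)"
  shows "(\<integral>I. (xtil_r q x (I r) $ i)^2 \<partial>measure_pmf (Pi_pmf {..<k} undefined (\<lambda>_. q)))
         = pmf q i * (x$i / pmf q i)^2"
proof -
  have "map_pmf (\<lambda>f. f r) (Pi_pmf {..<k} undefined (\<lambda>_. q)) = q"
    using Pi_pmf_component[of "{..<k}" r undefined "\<lambda>_. q"] assms by simp
  have "(\<integral>I. (xtil_r q x (I r) $ i)^2 \<partial>measure_pmf (Pi_pmf {..<k} undefined (\<lambda>_. q)))
      = (\<integral>l. (xtil_r q x l $ i)^2 \<partial>measure_pmf (map_pmf (\<lambda>f. f r) (Pi_pmf {..<k} undefined (\<lambda>_. q))))"
    by (simp only: integral_map_pmf)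
  also have "\<dots> = (\<integral>l. (xtil_r q x l $ i)^2 \<partial>measure_pmf q)"
    using \<open>map_pmf (\<lambda>f. f r) (Pi_pmf {..<k} undefined (\<lambda>_. q)) = q\<close> by (simp only:)
  finally have "(\<integral>I. (xtil_r q x (I r) $ i)^2 \<partial>measure_pmf (Pi_pmf {..<k} undefined (\<lambda>_. q)))
      = (\<integral>l. (xtil_r q x l $ i)^2 \<partial>measure_pmf q)" .
  then show ?thesis by (simp add: Eq_v)
qed

lemma EP_t:
  fixes q :: "'n::finite pmf"
  assumes k: "k > 0" and x: "\<bar>x$i\<bar> \<le> 1"
  shows "(\<integral>I. (xtil q k x I $ i)^2 \<partial>measure_pmf (Pi_pmf {..<k} undefined (\<lambda>_. q)))
         \<le> (1 / real k) * (pmf q i * (x$i / pmf q i)^2) + 1"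
proof -
  define a where "a = (\<lambda>l. xtil_r q x l $ i)"
  define m where "m = pmf q i * (x$i / pmf q i)"
  define v where "v = pmf q i * (x$i / pmf q i)^2"
  have mom: "(\<integral>I. (\<Sum>r<k. a (I r))^2 \<partial>measure_pmf (Pi_pmf {..<k} undefined (\<lambda>_. q)))
       = real k * v + real k * (real k - 1) * m^2"
    using Pi_moments[where a=a and q=q and k=k and dflt=undefined] by (simp add: a_def Eq_v Eq_m m_def v_def)
  have eq: "(\<lambda>I. (xtil q k x I $ i)^2) = (\<lambda>I. (1 / real k)^2 * (\<Sum>r<k. a (I r))^2)"
    by (rule ext) (simp add: xt_nth a_def power_divide)
  have m2: "m^2 \<le> 1"
  proof (cases "pmf q i = 0")
    case True then show ?thesis by (simp add: m_def)
  next
    case False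
    then have "m = x$i" by (simp add: m_def)
    then have "\<bar>m\<bar> \<le> 1" using x by simp
    then have "\<bar>m\<bar>^2 \<le> 1^2" by (intro power_mono) auto
    then show ?thesis by simp
  qed
  have v0: "v \<ge> 0" by (simp add: v_def)
  have "(\<integral>I. (xtil q k x I $ i)^2 \<partial>measure_pmf (Pi_pmf {..<k} undefined (\<lambda>_. q)))
      = (1 / real k)^2 * (real k * v + real k * (real k - 1) * m^2)"
    by (simp add: eq mom)
  also have "\<dots> = v / real k + ((real k - 1) / real k) * m^2"
    using k by (simp add: field_simps power2_eq_square)
  also have "\<dots> \<le> v / real k + 1 * 1"
  proof -
    have "(real k - 1) / real k \<le> 1" using k by simp
    moreover have "(real k - 1) / real k \<ge> 0" using k by simp
    ultimately have "((real k - 1) / real k) * m^2 \<le> 1 * 1"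
      using m2 by (intro mult_mono) auto
    then show ?thesis by simp
  qed
  finally show ?thesis by (simp add: v_def)
qed


lemma good_j: "linfnorm (x::real^'n::finite) \<le> 1 \<Longrightarrow> \<bar>x$j\<bar> \<le> 1"
proof -
  assume "linfnorm x \<le> 1"
  moreover have "\<bar>x$j\<bar> \<le> linfnorm x"
    unfolding linfnorm_def by (rule Max_ge) auto
  ultimately show ?thesis by linarith
qed

lemma xr_Om: "(\<lambda>\<omega>. xtil_r q (fst (fst \<omega>)) (fst (snd \<omega>) r)) \<in> borel_measurable (Om::('n::finite) OM)"
  by (rule xtil_r_meas[OF Xm Im0])

lemma xt_Om: "(\<lambda>\<omega>. xtil q k (fst (fst \<omega>)) (fst (snd \<omega>))) \<in> borel_measurable (Om::('n::finite) OM)"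
  by (rule xtil_meas[where I="\<lambda>\<omega>. fst (snd \<omega>)", OF Xm Im0])

lemma to_N:
  assumes "sets D = sets borel" "f \<in> borel_measurable (Om::('n::finite) OM)"
  shows "f \<in> borel_measurable (step_space D q k w)"
  using assms(2) by (subst measurable_cong_sets[OF sets_step[OF assms(1)] refl])

lemma bound_r: "\<bar>x$i\<bar> \<le> 1 \<Longrightarrow> (xtil_r q x l $ i)^2 \<le> (1 / pmf q i)^2"
proof -
  assume x: "\<bar>x$i\<bar> \<le> 1"
  have "\<bar>xtil_r q x l $ i\<bar> \<le> \<bar>1 / pmf q i\<bar>"
  proof (cases "l = i")
    case True
    have "\<bar>x$i\<bar> * \<bar>1 / pmf q i\<bar> \<le> 1 * \<bar>1 / pmf q i\<bar>"
      using x by (intro mult_right_mono) auto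
    then show ?thesis using True by (simp add: xr_nth abs_divide)
  qed (simp add: xr_nth)
  then have "\<bar>xtil_r q x l $ i\<bar>^2 \<le> \<bar>1 / pmf q i\<bar>^2" by (intro power_mono) auto
  then show ?thesis by simp
qed

lemma bound_t:
  assumes x: "\<bar>x$i\<bar> \<le> 1" and k: "k > 0"
  shows "(xtil q k x I $ i)^2 \<le> (1 / pmf q i)^2"
proof -
  have "\<bar>xtil_r q x l $ i\<bar> \<le> \<bar>1 / pmf q i\<bar>" for l
  proof -
    have "\<bar>xtil_r q x l $ i\<bar>^2 \<le> \<bar>1 / pmf q i\<bar>^2" using bound_r[OF x, of q l] by simp
    then show ?thesis by (rule power2_le_imp_le) simp
  qed
  then have "(\<Sum>r<k. \<bar>xtil_r q x (I r) $ i\<bar>) \<le> (\<Sum>r<k. \<bar>1 / pmf q i\<bar>)"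
    by (intro sum_mono) auto
  then have s: "(\<Sum>r<k. \<bar>xtil_r q x (I r) $ i\<bar>) \<le> real k * \<bar>1 / pmf q i\<bar>" by simp
  have "\<bar>xtil q k x I $ i\<bar> = (1 / real k) * \<bar>\<Sum>r<k. xtil_r q x (I r) $ i\<bar>"
    by (simp add: xt_nth abs_mult)
  also have "\<dots> \<le> (1 / real k) * (\<Sum>r<k. \<bar>xtil_r q x (I r) $ i\<bar>)"
    by (intro mult_left_mono sum_abs) auto
  also have "\<dots> \<le> (1 / real k) * (real k * \<bar>1 / pmf q i\<bar>)"
    by (intro mult_left_mono s) auto
  also have "\<dots> = \<bar>1 / pmf q i\<bar>" using k by simp
  finally have "\<bar>xtil q k x I $ i\<bar>^2 \<le> \<bar>1 / pmf q i\<bar>^2" by (intro power_mono) auto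
  then show ?thesis by simp
qed

lemma gtil_sq:
  assumes "\<forall>j. \<bar>(fst (fst \<omega>))$j\<bar> \<le> 1" "\<bar>snd (fst \<omega>)\<bar> \<le> B" "l1norm w \<le> B"
  shows "csq (gtil q k w \<omega>) $ i \<le> 4 * B^2 * (xtil q k (fst (fst \<omega>)) (fst (snd \<omega>)) $ i)^2"
proof -
  define x where "x = fst (fst \<omega>)"
  define y where "y = snd (fst \<omega>)"
  define I where "I = fst (snd \<omega>)"
  define j where "j = snd (snd \<omega>)"
  have om: "\<omega> = ((x, y), (I, j))" by (simp add: x_def y_def I_def j_def)
  have "csq (gtil q k w \<omega>) $ i = (phitil w x y j)^2 * (xtil q k x I $ i)^2"
    by (simp add: om csq_nth gtil_def power_mult_distrib)
  also have "\<dots> \<le> 4 * B^2 * (xtil q k x I $ i)^2"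
    using phi_bound[of x j y B w] assms by (intro mult_right_mono) (auto simp: om)
  finally show ?thesis by (simp add: om)
qed


lemma per_w:
  fixes D :: "((real^'n::finite) \<times> real) measure" and q :: "'n pmf"
  assumes D: "prob_space D" "sets D = sets borel" and k: "k > 0" and r: "r < k"
    and good: "AE xy in D. linfnorm (fst xy) \<le> 1 \<and> \<bar>snd xy\<bar> \<le> B" and w: "l1norm w \<le> B"
  shows "(\<integral>\<omega>. csq (xtil_r q (fst (fst \<omega>)) (fst (snd \<omega>) r)) \<partial>step_space D q k w)
           = (\<chi> i. \<integral>x. pmf q i * (fst x $ i / pmf q i)^2 \<partial>D)"
    and "(\<integral>\<omega>. csq (gtil q k w \<omega>) \<partial>step_space D q k w) $ i
           \<le> 4 * B^2 * ((1 / real k) * (\<integral>x. pmf q i * (fst x $ i / pmf q i)^2 \<partial>D) + 1)"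
proof -
  let ?N = "step_space D q k w"
  let ?P = "measure_pmf (Pi_pmf {..<k} undefined (\<lambda>_. q))"
  let ?M2 = "?P \<Otimes>\<^sub>M measure_pmf (jdist w)"
  interpret N: prob_space ?N by (rule step_prob[OF D(1)])
  interpret D: prob_space D by (rule D(1))
  have sfM2: "sigma_finite_measure ?M2"
  proof -
    interpret M2: prob_space ?M2 by (intro prob_space_pair prob_space_measure_pmf)
    show ?thesis ..
  qed
  have good': "AE xy in D. (\<forall>j. \<bar>fst xy $ j\<bar> \<le> 1) \<and> \<bar>snd xy\<bar> \<le> B"
    using good by eventually_elim (auto intro: good_j)
  have AEN: "AE \<omega> in ?N. (\<forall>j. \<bar>fst (fst \<omega>) $ j\<bar> \<le> 1) \<and> \<bar>snd (fst \<omega>)\<bar> \<le> B"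
    unfolding step_space_def by (rule AE_lift[OF sfM2 good'])
  have int1: "integrable ?N (\<lambda>\<omega>. (xtil_r q (fst (fst \<omega>)) (fst (snd \<omega>) r) $ i)^2)" for i
  proof (rule Bochner_Integration.integrable_bound[OF N.integrable_const[of "(1 / pmf q i)^2"]])
    show "(\<lambda>\<omega>. (xtil_r q (fst (fst \<omega>)) (fst (snd \<omega>) r) $ i)^2) \<in> borel_measurable ?N"
      by (rule to_N[OF D(2)]) (use xr_Om in measurable)
    show "AE \<omega> in ?N. norm ((xtil_r q (fst (fst \<omega>)) (fst (snd \<omega>) r) $ i)^2) \<le> norm ((1 / pmf q i)^2)"
      using AEN by eventually_elim (auto intro: bound_r)
  qed
  have int2: "integrable ?N (\<lambda>\<omega>. (xtil q k (fst (fst \<omega>)) (fst (snd \<omega>)) $ i)^2)" for i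
  proof (rule Bochner_Integration.integrable_bound[OF N.integrable_const[of "(1 / pmf q i)^2"]])
    show "(\<lambda>\<omega>. (xtil q k (fst (fst \<omega>)) (fst (snd \<omega>)) $ i)^2) \<in> borel_measurable ?N"
      by (rule to_N[OF D(2)]) (use xt_Om in measurable)
    show "AE \<omega> in ?N. norm ((xtil q k (fst (fst \<omega>)) (fst (snd \<omega>)) $ i)^2) \<le> norm ((1 / pmf q i)^2)"
      using AEN by eventually_elim (auto intro: bound_t k)
  qed
  have V: "(\<integral>\<omega>. (xtil_r q (fst (fst \<omega>)) (fst (snd \<omega>) r) $ i)^2 \<partial>?N) = (\<integral>x. pmf q i * (fst x $ i / pmf q i)^2 \<partial>D)"
       and Vint: "integrable D (\<lambda>x. pmf q i * (fst x $ i / pmf q i)^2)" for i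
  proof -
    have e: "(\<integral>I. (xtil_r q x (I r) $ i)^2 \<partial>?P) = pmf q i * (x $ i / pmf q i)^2" for x
      by (rule EP_r[OF r])
    show "(\<integral>\<omega>. (xtil_r q (fst (fst \<omega>)) (fst (snd \<omega>) r) $ i)^2 \<partial>?N) = (\<integral>x. pmf q i * (fst x $ i / pmf q i)^2 \<partial>D)"
      using fub(1)[OF D(1), where f="\<lambda>x I. (xtil_r q (fst x) (I r) $ i)^2", OF int1[of i]] by (simp only: e)
    show "integrable D (\<lambda>x. pmf q i * (fst x $ i / pmf q i)^2)"
      using fub(2)[OF D(1), where f="\<lambda>x I. (xtil_r q (fst x) (I r) $ i)^2", OF int1[of i]] by (simp only: e)
  qed
  show "(\<integral>\<omega>. csq (xtil_r q (fst (fst \<omega>)) (fst (snd \<omega>) r)) \<partial>?N)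
           = (\<chi> i. \<integral>x. pmf q i * (fst x $ i / pmf q i)^2 \<partial>D)"
  proof -
    have ivec: "integrable ?N (\<lambda>\<omega>. csq (xtil_r q (fst (fst \<omega>)) (fst (snd \<omega>) r)))"
      by (rule integrable_vec) (simp add: csq_nth int1)
    show ?thesis
      by (simp add: vec_eq_iff integral_nth[OF ivec] csq_nth V)
  qed
  show "(\<integral>\<omega>. csq (gtil q k w \<omega>) \<partial>?N) $ i
           \<le> 4 * B^2 * ((1 / real k) * (\<integral>x. pmf q i * (fst x $ i / pmf q i)^2 \<partial>D) + 1)"
  proof (cases "integrable ?N (\<lambda>\<omega>. csq (gtil q k w \<omega>))")
    case False
    have "0 \<le> (\<integral>x. pmf q i * (fst x $ i / pmf q i)^2 \<partial>D)" by (intro Bochner_Integration.integral_nonneg) simp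
    then have "0 \<le> 4 * B^2 * ((1 / real k) * (\<integral>x. pmf q i * (fst x $ i / pmf q i)^2 \<partial>D) + 1)"
      by simp
    then show ?thesis using False by (simp add: not_integrable_integral_eq)
  next
    case True
    have ig: "integrable ?N (\<lambda>\<omega>. csq (gtil q k w \<omega>) $ i)"
      using integrable_bounded_linear[OF bounded_linear_vec_nth True] .
    have "(\<integral>\<omega>. csq (gtil q k w \<omega>) \<partial>?N) $ i = (\<integral>\<omega>. csq (gtil q k w \<omega>) $ i \<partial>?N)"
      by (rule integral_nth[OF True])
    also have "\<dots> \<le> (\<integral>\<omega>. 4 * B^2 * (xtil q k (fst (fst \<omega>)) (fst (snd \<omega>)) $ i)^2 \<partial>?N)"
    proof (rule integral_mono_AE[OF ig])
      show "integrable ?N (\<lambda>\<omega>. 4 * B^2 * (xtil q k (fst (fst \<omega>)) (fst (snd \<omega>)) $ i)^2)"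
        using int2[of i] by simp
      show "AE \<omega> in ?N. csq (gtil q k w \<omega>) $ i \<le> 4 * B^2 * (xtil q k (fst (fst \<omega>)) (fst (snd \<omega>)) $ i)^2"
        using AEN by eventually_elim (rule gtil_sq, auto intro: w)
    qed
    also have "\<dots> = 4 * B^2 * (\<integral>\<omega>. (xtil q k (fst (fst \<omega>)) (fst (snd \<omega>)) $ i)^2 \<partial>?N)"
      by simp
    also have "(\<integral>\<omega>. (xtil q k (fst (fst \<omega>)) (fst (snd \<omega>)) $ i)^2 \<partial>?N)
        = (\<integral>x. (\<integral>I. (xtil q k (fst x) I $ i)^2 \<partial>?P) \<partial>D)"
      by (rule fub(1)[OF D(1), where f="\<lambda>x I. (xtil q k (fst x) I $ i)^2", OF int2[of i]])
    also have "\<dots> \<le> (\<integral>x. (1 / real k) * (pmf q i * (fst x $ i / pmf q i)^2) + 1 \<partial>D)"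
    proof (rule integral_mono_AE)
      show "integrable D (\<lambda>x. \<integral>I. (xtil q k (fst x) I $ i)^2 \<partial>?P)"
        by (rule fub(2)[OF D(1), where f="\<lambda>x I. (xtil q k (fst x) I $ i)^2", OF int2[of i]])
      show "integrable D (\<lambda>x. (1 / real k) * (pmf q i * (fst x $ i / pmf q i)^2) + 1)"
        using Vint[of i] by simp
      show "AE x in D. (\<integral>I. (xtil q k (fst x) I $ i)^2 \<partial>?P) \<le> (1 / real k) * (pmf q i * (fst x $ i / pmf q i)^2) + 1"
        using good' by eventually_elim (rule EP_t[OF k], auto)
    qed
    also have "\<dots> = (1 / real k) * (\<integral>x. pmf q i * (fst x $ i / pmf q i)^2 \<partial>D) + 1"
      using Vint[of i] by (simp add: D.prob_space)
    finally show ?thesis by (simp add: mult_left_mono)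
  qed
qed


lemma linf_ge: "\<bar>v $ i\<bar> \<le> linfnorm (v::real^'n::finite)"
  unfolding linfnorm_def by (rule Max_ge) auto

lemma linf_le: "(\<And>i. \<bar>v $ i\<bar> \<le> C) \<Longrightarrow> linfnorm (v::real^'n::finite) \<le> C"
  unfolding linfnorm_def by (rule Max.boundedI) auto

theorem lemma12:
  fixes D :: "((real^'n) \<times> real) measure" and q :: "'n pmf"
    and k :: nat and B \<eta> :: real
  assumes "prob_space D" and "sets D = sets borel"
    and "B > 0" and "\<eta> > 0" and "k > 0"
    and "AE xy in D. linfnorm (fst xy) \<le> 1 \<and> \<bar>snd xy\<bar> \<le> B"
  shows "\<forall>t. \<forall>r<k.
     linfnorm (EA D q k B \<eta> t (\<lambda>s \<omega>. csq (gtil q k (weight B s) \<omega>)))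
       \<le> 4 * B^2 * ((1 / real k) *
            linfnorm (EA D q k B \<eta> t (\<lambda>s \<omega>. csq (xtil_r q (fst (fst \<omega>)) (fst (snd \<omega>) r)))) + 1)"
proof (intro allI impI)
  fix t r assume r: "r < k"
  note D = assms(1,2)
  let ?S = "state_dist D q k B \<eta> t"
  define V where "V = (\<chi> i. \<integral>x. pmf q i * (fst x $ i / pmf q i)^2 \<partial>D)"
  define f where "f = (\<lambda>s. \<integral>\<omega>. csq (gtil q k (weight B s) \<omega>) \<partial>step_space D q k (weight B s))"
  interpret S: prob_space ?S using state_ok[OF D] by blast
  have wl: "l1norm (weight B s) \<le> B" for s by (rule weight_l1[OF assms(3)])
  have RHS: "EA D q k B \<eta> t (\<lambda>s \<omega>. csq (xtil_r q (fst (fst \<omega>)) (fst (snd \<omega>) r))) = V"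
  proof -
    have "EA D q k B \<eta> t (\<lambda>s \<omega>. csq (xtil_r q (fst (fst \<omega>)) (fst (snd \<omega>) r))) = (\<integral>s. V \<partial>?S)"
      unfolding EA_def V_def
      by (rule Bochner_Integration.integral_cong[OF refl])
         (rule per_w(1)[OF D assms(5) r assms(6) wl])
    also have "\<dots> = V" by (simp add: S.prob_space)
    finally show ?thesis .
  qed
  have V0: "0 \<le> V $ i" for i
    unfolding V_def by (simp add: Bochner_Integration.integral_nonneg)
  have fb: "f s $ i \<le> 4 * B^2 * ((1 / real k) * V $ i + 1)" for s i
    unfolding f_def V_def using per_w(2)[OF D assms(5) r assms(6) wl] by simp
  have f0: "0 \<le> f s $ i" for s i
    unfolding f_def by (rule vec_integral_nonneg) (simp add: csq_nth)
  have LHS: "EA D q k B \<eta> t (\<lambda>s \<omega>. csq (gtil q k (weight B s) \<omega>)) = (\<integral>s. f s \<partial>?S)"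
    unfolding EA_def f_def ..
  show "linfnorm (EA D q k B \<eta> t (\<lambda>s \<omega>. csq (gtil q k (weight B s) \<omega>)))
       \<le> 4 * B^2 * ((1 / real k) *
            linfnorm (EA D q k B \<eta> t (\<lambda>s \<omega>. csq (xtil_r q (fst (fst \<omega>)) (fst (snd \<omega>) r)))) + 1)"
    unfolding LHS RHS
  proof (rule linf_le)
    fix i
    have nn: "0 \<le> (\<integral>s. f s \<partial>?S) $ i" by (rule vec_integral_nonneg) (rule f0)
    have up: "(\<integral>s. f s \<partial>?S) $ i \<le> 4 * B^2 * ((1 / real k) * V $ i + 1)"
    proof (cases "integrable ?S f")
      case True
      define C where "C = 4 * B^2 * ((1 / real k) * V $ i + 1)"
      have fb': "f s $ i \<le> C" for s unfolding C_def by (rule fb)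
      have "(\<integral>s. f s \<partial>?S) $ i = (\<integral>s. f s $ i \<partial>?S)" by (rule integral_nth[OF True])
      also have "\<dots> \<le> (\<integral>s. C \<partial>?S)"
        by (rule Bochner_Integration.integral_mono[OF integrable_bounded_linear[OF bounded_linear_vec_nth True]])
           (rule S.integrable_const, rule fb')
      also have "\<dots> = C" by (simp add: S.prob_space)
      finally show ?thesis unfolding C_def .
    next
      case False
      then show ?thesis using V0[of i] by (simp add: not_integrable_integral_eq)
    qed
    have "V $ i \<le> linfnorm V" using linf_ge[of V i] by linarith
    then have "4 * B^2 * ((1 / real k) * V $ i + 1) \<le> 4 * B^2 * ((1 / real k) * linfnorm V + 1)"
      by (intro mult_left_mono add_right_mono) auto
    then show "\<bar>(\<integral>s. f s \<partial>?S) $ i\<bar> \<le> 4 * B^2 * ((1 / real k) * linfnorm V + 1)"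
      using nn up by linarith
  qed
qed


end
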